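(* For each $n$ let $\mathcal{C},\mathcal{C}'$ be conjugacy classes of $S_n$ whose elements have $c_j$ (resp. $c'_j$) $j$-cycles, with total cycle counts $c=\sum_j c_j$ and $c'=\sum_j c'_j$. Let $\pi\in\mathcal{C}$, $\pi'\in\mathcal{C}'$ be independent and uniform, and let $N_k$ be the number of orbits of size $k$ of $\langle\pi,\pi'\rangle$ on $\{1,\dots,n\}$. Assume $c_1+c'_1=o(n)$ and that there is a constant $\delta>0$ with $c+c'\leq(1-\delta)n$. Then there are a constant $\eta>0$ and a function $g(n)=o(n)$ such that for all $1\leq k\leq n/2$, \[ \mathbf{E} N_k \leq e^{-\eta k + g(n)}. \]
   Context: Asymptotic notation is with respect to $n\to\infty$. *)

theory Defs
  imports "HOL-Combinatorics.Permutations" "HOL-Library.Landau_Symbols" Complex_Main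
begin

definition conj_class :: "nat \<Rightarrow> (nat \<Rightarrow> nat) \<Rightarrow> (nat \<Rightarrow> nat) set" where
  "conj_class n \<rho> = {\<sigma>. \<exists>\<tau>. \<tau> permutes {1..n} \<and> \<sigma> = \<tau> \<circ> \<rho> \<circ> inv \<tau>}"

definition cyc :: "(nat \<Rightarrow> nat) \<Rightarrow> nat \<Rightarrow> nat set" where
  "cyc \<sigma> x = {y. (\<lambda>a b. b = \<sigma> a \<or> a = \<sigma> b)\<^sup>*\<^sup>* x y}"

definition num_cycles :: "nat \<Rightarrow> (nat \<Rightarrow> nat) \<Rightarrow> nat \<Rightarrow> nat" where
  "num_cycles n \<sigma> j = card {S. \<exists>x\<in>{1..n}. S = cyc \<sigma> x \<and> card S = j}"

definition total_cycles :: "nat \<Rightarrow> (nat \<Rightarrow> nat) \<Rightarrow> nat" where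
  "total_cycles n \<sigma> = (\<Sum>j\<in>{1..n}. num_cycles n \<sigma> j)"

definition orb2 :: "(nat \<Rightarrow> nat) \<Rightarrow> (nat \<Rightarrow> nat) \<Rightarrow> nat \<Rightarrow> nat set" where
  "orb2 \<pi> \<pi>' x = {y. (\<lambda>a b. b = \<pi> a \<or> b = \<pi>' a \<or> a = \<pi> b \<or> a = \<pi>' b)\<^sup>*\<^sup>* x y}"

definition N_orbits :: "nat \<Rightarrow> nat \<Rightarrow> (nat \<Rightarrow> nat) \<Rightarrow> (nat \<Rightarrow> nat) \<Rightarrow> nat" where
  "N_orbits n k \<pi> \<pi>' = card {S. \<exists>x\<in>{1..n}. S = orb2 \<pi> \<pi>' x \<and> card S = k}"

definition EN :: "nat \<Rightarrow> nat \<Rightarrow> (nat \<Rightarrow> nat) set \<Rightarrow> (nat \<Rightarrow> nat) set \<Rightarrow> real" where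
  "EN n k C C' = (\<Sum>\<pi>\<in>C. \<Sum>\<pi>'\<in>C'. real (N_orbits n k \<pi> \<pi>')) / (real (card C) * real (card C'))"

end

theory Submission imports Defs begin

lemma rtc_closed:
  assumes "R\<^sup>*\<^sup>* x y" "x \<in> A" "\<And>a b. R a b \<Longrightarrow> a \<in> A \<Longrightarrow> b \<in> A"
  shows "y \<in> A"
  using assms(1,2) by (induction rule: rtranclp_induct) (auto intro: assms(3))

lemma perm_step_in:
  assumes "p permutes {1..n}" "a \<in> {1..n}" "b = p a \<or> a = p b"
  shows "b \<in> {1..n}"
  using assms by (metis permutes_in_image permutes_not_in)

lemma orb2_sub:
  assumes "p permutes {1..n}" "q permutes {1..n}" "x \<in> {1..n}"
  shows "orb2 p q x \<subseteq> {1..n}"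
proof
  fix y assume "y \<in> orb2 p q x"
  then have "(\<lambda>a b. b = p a \<or> b = q a \<or> a = p b \<or> a = q b)\<^sup>*\<^sup>* x y" by (simp add: orb2_def)
  then show "y \<in> {1..n}"
    by (rule rtc_closed) (use assms perm_step_in in blast)+
qed

lemma orb2_inv1:
  assumes "p permutes {1..n}" "q permutes {1..n}" "x \<in> {1..n}"
  shows "p ` orb2 p q x = orb2 p q x"
proof (rule endo_inj_surj)
  show "finite (orb2 p q x)" using orb2_sub[OF assms] finite_subset by blast
  show "p ` orb2 p q x \<subseteq> orb2 p q x"
    unfolding orb2_def by (auto intro: rtranclp.rtrancl_into_rtrancl)
  show "inj_on p (orb2 p q x)" using assms(1) permutes_inj_on by blast
qed

lemma orb2_inv2:
  assumes "p permutes {1..n}" "q permutes {1..n}" "x \<in> {1..n}"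
  shows "q ` orb2 p q x = orb2 p q x"
proof (rule endo_inj_surj)
  show "finite (orb2 p q x)" using orb2_sub[OF assms] finite_subset by blast
  show "q ` orb2 p q x \<subseteq> orb2 p q x"
    unfolding orb2_def by (auto intro: rtranclp.rtrancl_into_rtrancl)
  show "inj_on q (orb2 p q x)" using assms(2) permutes_inj_on by blast
qed

lemma cyc_sub:
  assumes "p permutes {1..n}" "x \<in> {1..n}"
  shows "cyc p x \<subseteq> {1..n}"
proof
  fix y assume "y \<in> cyc p x"
  then have "(\<lambda>a b. b = p a \<or> a = p b)\<^sup>*\<^sup>* x y" by (simp add: cyc_def)
  then show "y \<in> {1..n}"
    by (rule rtc_closed) (use assms perm_step_in in blast)+
qed

lemma cyc_self: "x \<in> cyc p x"
  by (simp add: cyc_def)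

lemma rtc_sym:
  assumes "\<And>a b. R a b \<Longrightarrow> R b a" "R\<^sup>*\<^sup>* x y" shows "R\<^sup>*\<^sup>* y x"
  using assms(2) by (induction rule: rtranclp_induct)
    (auto intro: converse_rtranclp_into_rtranclp assms(1))

lemma cyc_eq:
  assumes "y \<in> cyc p x" shows "cyc p y = cyc p x"
proof -
  let ?R = "\<lambda>a b. b = p a \<or> a = p b"
  have xy: "?R\<^sup>*\<^sup>* x y" using assms by (simp add: cyc_def)
  have yx: "?R\<^sup>*\<^sup>* y x" by (rule rtc_sym[OF _ xy]) auto
  show ?thesis unfolding cyc_def
    using xy yx by (auto intro: rtranclp_trans)
qed

lemma cyc_disj:
  assumes "z \<in> cyc p x" "z \<in> cyc p y" shows "cyc p x = cyc p y"
  using cyc_eq[OF assms(1)] cyc_eq[OF assms(2)] by simp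

lemma cyc_in_inv:
  assumes "p permutes {1..n}" "p ` S = S" "x \<in> S"
  shows "cyc p x \<subseteq> S"
proof
  fix y assume "y \<in> cyc p x"
  then have "(\<lambda>a b. b = p a \<or> a = p b)\<^sup>*\<^sup>* x y" by (simp add: cyc_def)
  then show "y \<in> S"
  proof (rule rtc_closed)
    show "x \<in> S" by fact
    fix a b assume ab: "b = p a \<or> a = p b" "a \<in> S"
    show "b \<in> S"
    proof (cases "b = p a")
      case True then show ?thesis using ab assms(2) by blast
    next
      case False
      then have "a = p b" using ab by blast
      moreover obtain b' where "b' \<in> S" "a = p b'" using ab(2) assms(2) by blast
      ultimately show ?thesis using permutes_inj[OF assms(1)] by (metis injD)
    qed
  qed
qed


definition invsets :: "nat \<Rightarrow> (nat \<Rightarrow> nat) \<Rightarrow> nat \<Rightarrow> nat set set" where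
  "invsets n p k = {S. S \<subseteq> {1..n} \<and> card S = k \<and> p ` S = S}"

lemma cyc_card:
  assumes "p permutes {1..n}" "x \<in> {1..n}"
  shows "card (cyc p x) \<in> {1..n}" "finite (cyc p x)"
proof -
  have s: "cyc p x \<subseteq> {1..n}" by (rule cyc_sub[OF assms])
  show f: "finite (cyc p x)" using s finite_subset by blast
  have "card (cyc p x) \<le> n" using card_mono[OF _ s] by simp
  moreover have "card (cyc p x) \<ge> 1"
  proof -
    have "cyc p x \<noteq> {}" using cyc_self[of x p] by blast
    then have "card (cyc p x) > 0" using f by (simp add: card_gt_0_iff)
    then show ?thesis by simp
  qed
  ultimately show "card (cyc p x) \<in> {1..n}" by simp
qed

lemma total_ge:
  assumes "p permutes {1..n}"
  shows "card (cyc p ` {1..n}) \<le> total_cycles n p"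
proof -
  define A where "A j = {S. \<exists>x\<in>{1..n}. S = cyc p x \<and> card S = j}" for j
  have eq: "cyc p ` {1..n} = (\<Union>j\<in>{1..n}. A j)"
  proof (rule set_eqI, rule iffI)
    fix Z assume "Z \<in> cyc p ` {1..n}"
    then obtain x where x: "x \<in> {1..n}" "Z = cyc p x" by blast
    have "card Z \<in> {1..n}" using cyc_card(1)[OF assms x(1)] x(2) by simp
    moreover have "Z \<in> A (card Z)" unfolding A_def using x by blast
    ultimately show "Z \<in> (\<Union>j\<in>{1..n}. A j)" by blast
  next
    fix Z assume "Z \<in> (\<Union>j\<in>{1..n}. A j)"
    then obtain j where "Z \<in> A j" by blast
    then obtain x where "x \<in> {1..n}" "Z = cyc p x" unfolding A_def by blast
    then show "Z \<in> cyc p ` {1..n}" by blast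
  qed
  have "card (cyc p ` {1..n}) \<le> (\<Sum>j\<in>{1..n}. card (A j))"
    unfolding eq by (rule card_UN_le) simp
  also have "\<dots> = total_cycles n p" unfolding total_cycles_def num_cycles_def A_def ..
  finally show ?thesis .
qed

lemma invsets_bound:
  fixes t :: real
  assumes p: "p permutes {1..n}" and t: "0 < t" "t \<le> 1"
  shows "real (card (invsets n p k)) * t ^ k \<le> 2 ^ (num_cycles n p 1) * (1 + t^2) ^ (total_cycles n p)"
proof -
  define Cyc where "Cyc = cyc p ` {1..n}"
  define Inv where "Inv = {S. S \<subseteq> {1..n} \<and> p ` S = S}"
  have fC: "finite Cyc" unfolding Cyc_def by simp
  have fI: "finite Inv" unfolding Inv_def
    by (rule finite_subset[of _ "Pow {1..n}"]) auto
  have sub1: "invsets n p k \<subseteq> Inv" unfolding invsets_def Inv_def by auto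
  have "real (card (invsets n p k)) * t ^ k = (\<Sum>S\<in>invsets n p k. t ^ card S)"
    unfolding invsets_def by simp
  also have "\<dots> \<le> (\<Sum>S\<in>Inv. t ^ card S)"
    by (rule sum_mono2[OF fI sub1]) (use t in auto)
  also have "\<dots> \<le> (\<Sum>S\<in>Union ` Pow Cyc. t ^ card S)"
  proof (rule sum_mono2)
    show "finite (Union ` Pow Cyc)" using fC by simp
    show "Inv \<subseteq> Union ` Pow Cyc"
    proof
      fix S assume "S \<in> Inv"
      then have S: "S \<subseteq> {1..n}" "p ` S = S" unfolding Inv_def by auto
      have "S = \<Union> (cyc p ` S)"
        using cyc_in_inv[OF p S(2)] cyc_self by blast
      moreover have "cyc p ` S \<in> Pow Cyc" using S(1) unfolding Cyc_def by auto
      ultimately show "S \<in> Union ` Pow Cyc" by blast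
    qed
  qed (use t in auto)
  also have "\<dots> \<le> (\<Sum>A\<in>Pow Cyc. t ^ card (\<Union>A))"
    using sum_image_le[of "Pow Cyc" "\<lambda>S. t ^ card S" Union] fC t by (simp add: o_def)
  also have "\<dots> = (\<Sum>A\<in>Pow Cyc. \<Prod>Z\<in>A. t ^ card Z)"
  proof (rule sum.cong[OF refl])
    fix A assume A: "A \<in> Pow Cyc"
    have "card (\<Union>A) = sum card A"
    proof (rule card_Union_disjoint)
      show "disjoint A"
      proof (rule pairwiseI)
        fix X Y assume XY: "X \<in> A" "Y \<in> A" "X \<noteq> Y"
        obtain a b where "X = cyc p a" "Y = cyc p b" using A XY(1,2) unfolding Cyc_def by blast
        then show "disjnt X Y" unfolding disjnt_def using cyc_disj[of _ p a b] XY(3) by auto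
      qed
      show "\<And>B. B \<in> A \<Longrightarrow> finite B" using A cyc_card(2)[OF p] unfolding Cyc_def by auto
    qed
    then show "t ^ card (\<Union>A) = (\<Prod>Z\<in>A. t ^ card Z)" by (simp add: power_sum)
  qed
  also have "\<dots> = (\<Prod>Z\<in>Cyc. t ^ card Z + 1)"
    using prod_add[OF fC, of "\<lambda>Z. t ^ card Z" "\<lambda>_. 1"] by simp
  also have "\<dots> \<le> (\<Prod>Z\<in>Cyc. if card Z = 1 then 2 else 1 + t^2)"
  proof (rule prod_mono)
    fix Z assume "Z \<in> Cyc"
    then have c: "card Z \<ge> 1" using cyc_card(1)[OF p] unfolding Cyc_def by auto
    show "0 \<le> t ^ card Z + 1 \<and> t ^ card Z + 1 \<le> (if card Z = 1 then 2 else 1 + t^2)"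
    proof (cases "card Z = 1")
      case True then show ?thesis using t by simp
    next
      case False
      then have "card Z \<ge> 2" using c by simp
      then have "t ^ card Z \<le> t ^ 2" using t by (intro power_decreasing) auto
      then show ?thesis using t False by simp
    qed
  qed
  also have "\<dots> = 2 ^ card (Cyc \<inter> {Z. card Z = 1}) * (1 + t^2) ^ card (Cyc \<inter> - {Z. card Z = 1})"
    using prod.If_cases[OF fC, of "\<lambda>Z. card Z = 1" "\<lambda>_. 2" "\<lambda>_. 1 + t^2"] by simp
  also have "\<dots> \<le> 2 ^ (num_cycles n p 1) * (1 + t^2) ^ (total_cycles n p)"
  proof (rule mult_mono)
    have "Cyc \<inter> {Z. card Z = 1} = {S. \<exists>x\<in>{1..n}. S = cyc p x \<and> card S = 1}"
      unfolding Cyc_def by auto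
    then show "(2::real) ^ card (Cyc \<inter> {Z. card Z = 1}) \<le> 2 ^ num_cycles n p 1"
      by (simp add: num_cycles_def)
    have "card (Cyc \<inter> - {Z. card Z = 1}) \<le> card Cyc" using fC by (intro card_mono) auto
    also have "\<dots> \<le> total_cycles n p" using total_ge[OF p] unfolding Cyc_def .
    finally show "(1 + t^2) ^ card (Cyc \<inter> - {Z. card Z = 1}) \<le> (1 + t^2) ^ total_cycles n p"
      by (intro power_increasing) auto
  qed auto
  finally show ?thesis .
qed


lemma exists_perm_map:
  fixes n :: nat
  assumes "S \<subseteq> {1..n}" "S' \<subseteq> {1..n}" "card S = card S'"
  shows "\<exists>\<tau>. \<tau> permutes {1..n} \<and> \<tau> ` S = S'"
proof -
  have fS1: "finite S" using finite_subset[OF assms(1)] by simp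
  have fS2: "finite S'" using finite_subset[OF assms(2)] by simp
  note fS = fS1 fS2
  obtain f where f: "bij_betw f S S'" using finite_same_card_bij[OF fS assms(3)] by blast
  have "card ({1..n} - S) = card ({1..n} - S')"
    using assms by (simp add: card_Diff_subset fS)
  then obtain g where g: "bij_betw g ({1..n} - S) ({1..n} - S')"
    using finite_same_card_bij[of "{1..n} - S" "{1..n} - S'"] by auto
  define \<tau> where "\<tau> x = (if x \<in> S then f x else if x \<in> {1..n} then g x else x)" for x
  have b1: "bij_betw \<tau> S S'" using f by (rule bij_betw_cong[THEN iffD1, rotated]) (simp add: \<tau>_def)
  have b2: "bij_betw \<tau> ({1..n} - S) ({1..n} - S')"
    using g by (rule bij_betw_cong[THEN iffD1, rotated]) (simp add: \<tau>_def)
  have "bij_betw \<tau> (S \<union> ({1..n} - S)) (S' \<union> ({1..n} - S'))"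
    by (rule bij_betw_combine[OF b1 b2]) auto
  moreover have "S \<union> ({1..n} - S) = {1..n}" "S' \<union> ({1..n} - S') = {1..n}" using assms by auto
  ultimately have "bij_betw \<tau> {1..n} {1..n}" by simp
  then have "\<tau> permutes {1..n}"
    by (rule bij_imp_permutes) (use assms(1) in \<open>auto simp: \<tau>_def\<close>)
  moreover have "\<tau> ` S = S'" using b1 by (simp add: bij_betw_def)
  ultimately show ?thesis by blast
qed

lemma conj_image:
  assumes "bij \<tau>"
  shows "(\<tau> \<circ> \<pi> \<circ> inv \<tau>) ` (\<tau> ` S) = \<tau> ` (\<pi> ` S)"
proof -
  show ?thesis using assms by (simp add: image_image bij_is_inj inv_f_f)
qed

lemma conj_class_perm:
  assumes "\<rho> permutes {1..n}" "\<pi> \<in> conj_class n \<rho>"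
  shows "\<pi> permutes {1..n}"
  using assms unfolding conj_class_def
  by (auto intro!: permutes_compose permutes_inv)

lemma conj_class_finite: "finite (conj_class n \<rho>)" if "\<rho> permutes {1..n}"
  by (rule finite_subset[of _ "{\<pi>. \<pi> permutes {1..n}}"])
     (use conj_class_perm[OF that] finite_permutations in auto)

lemma conj_class_self: "\<rho> \<in> conj_class n \<rho>"
  unfolding conj_class_def by (rule CollectI, rule exI[of _ id]) simp

lemma conj_class_closed:
  assumes "\<tau> permutes {1..n}" "\<pi> \<in> conj_class n \<rho>"
  shows "\<tau> \<circ> \<pi> \<circ> inv \<tau> \<in> conj_class n \<rho>"
proof -
  obtain \<sigma> where s: "\<sigma> permutes {1..n}" "\<pi> = \<sigma> \<circ> \<rho> \<circ> inv \<sigma>"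
    using assms(2) unfolding conj_class_def by blast
  have "inv (\<tau> \<circ> \<sigma>) = inv \<sigma> \<circ> inv \<tau>"
    using o_inv_distrib[OF permutes_bij[OF assms(1)] permutes_bij[OF s(1)]] by simp
  then have "\<tau> \<circ> \<pi> \<circ> inv \<tau> = (\<tau> \<circ> \<sigma>) \<circ> \<rho> \<circ> inv (\<tau> \<circ> \<sigma>)"
    using s(2) by (simp add: o_assoc)
  moreover have "\<tau> \<circ> \<sigma> permutes {1..n}" using assms(1) s(1) by (rule permutes_compose[rotated])
  ultimately show ?thesis unfolding conj_class_def by blast
qed

lemma stab_le:
  assumes "S \<subseteq> {1..n}" "S' \<subseteq> {1..n}" "card S = card S'" and that: "\<rho> permutes {1..n}"
  shows "card {\<pi>\<in>conj_class n \<rho>. \<pi> ` S = S} \<le> card {\<pi>\<in>conj_class n \<rho>. \<pi> ` S' = S'}"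
proof -
  obtain \<tau> where t: "\<tau> permutes {1..n}" "\<tau> ` S = S'" using exists_perm_map[OF assms(1-3)] by blast
  have bt: "bij \<tau>" using permutes_bij[OF t(1)] .
  show ?thesis
  proof (rule card_inj_on_le)
    show "inj_on (\<lambda>\<pi>. \<tau> \<circ> \<pi> \<circ> inv \<tau>) {\<pi> \<in> conj_class n \<rho>. \<pi> ` S = S}"
    proof (rule inj_onI)
      fix x y assume "\<tau> \<circ> x \<circ> inv \<tau> = \<tau> \<circ> y \<circ> inv \<tau>"
      then have "inv \<tau> \<circ> (\<tau> \<circ> x \<circ> inv \<tau>) \<circ> \<tau> = inv \<tau> \<circ> (\<tau> \<circ> y \<circ> inv \<tau>) \<circ> \<tau>" by simp
      then show "x = y" using bt
        by (simp add: o_assoc bij_is_inj bij_is_surj inv_o_cancel surj_iff)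
    qed
    show "(\<lambda>\<pi>. \<tau> \<circ> \<pi> \<circ> inv \<tau>) ` {\<pi> \<in> conj_class n \<rho>. \<pi> ` S = S} \<subseteq> {\<pi> \<in> conj_class n \<rho>. \<pi> ` S' = S'}"
    proof (rule image_subsetI)
      fix \<pi> assume p: "\<pi> \<in> {\<pi> \<in> conj_class n \<rho>. \<pi> ` S = S}"
      have "(\<tau> \<circ> \<pi> \<circ> inv \<tau>) ` S' = S'"
        using conj_image[OF bt, of \<pi> S] p t(2) by simp
      then show "\<tau> \<circ> \<pi> \<circ> inv \<tau> \<in> {\<pi> \<in> conj_class n \<rho>. \<pi> ` S' = S'}"
        using conj_class_closed[OF t(1)] p by blast
    qed
    show "finite {\<pi> \<in> conj_class n \<rho>. \<pi> ` S' = S'}" using conj_class_finite[OF that] by simp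
  qed
qed

lemma inv_le:
  assumes "\<rho> permutes {1..n}" "\<pi> \<in> conj_class n \<rho>"
  shows "card (invsets n \<pi> k) \<le> card (invsets n \<rho> k)"
proof -
  obtain \<sigma> where s: "\<sigma> permutes {1..n}" "\<pi> = \<sigma> \<circ> \<rho> \<circ> inv \<sigma>"
    using assms(2) unfolding conj_class_def by blast
  define \<tau> where "\<tau> = inv \<sigma>"
  have tp: "\<tau> permutes {1..n}" unfolding \<tau>_def using permutes_inv[OF s(1)] .
  have bt: "bij \<tau>" using permutes_bij[OF tp] .
  have rho: "\<rho> = \<tau> \<circ> \<pi> \<circ> inv \<tau>"
    using s(2) permutes_bij[OF s(1)] unfolding \<tau>_def
    by (simp add: o_assoc inv_inv_eq bij_is_inj bij_is_surj)
  show ?thesis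
  proof (rule card_inj_on_le)
    show "inj_on ((`) \<tau>) (invsets n \<pi> k)"
      using inj_image_eq_iff[OF bij_is_inj[OF bt]] by (auto intro: inj_onI)
    show "(`) \<tau> ` invsets n \<pi> k \<subseteq> invsets n \<rho> k"
    proof
      fix T assume "T \<in> (`) \<tau> ` invsets n \<pi> k"
      then obtain S where S: "S \<in> invsets n \<pi> k" "T = \<tau> ` S" by blast
      have Sp: "S \<subseteq> {1..n}" "card S = k" "\<pi> ` S = S" using S(1) unfolding invsets_def by auto
      have "\<rho> ` T = (\<tau> \<circ> \<pi> \<circ> inv \<tau>) ` (\<tau> ` S)" by (simp only: rho S(2))
      also have "\<dots> = \<tau> ` (\<pi> ` S)" by (rule conj_image[OF bt])
      also have "\<dots> = T" by (simp only: Sp(3) S(2))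
      finally have "\<rho> ` T = T" .
      moreover have "T \<subseteq> {1..n}"
      proof -
        have "\<tau> ` S \<subseteq> \<tau> ` {1..n}" using Sp(1) by (rule image_mono)
        then show ?thesis using permutes_image[OF tp] S(2) by simp
      qed
      moreover have "card T = k"
      proof -
        have "inj_on \<tau> S" using bij_is_inj[OF bt] by (rule inj_on_subset) simp
        then have "card (\<tau> ` S) = card S" by (rule card_image)
        then show ?thesis using Sp(2) S(2) by simp
      qed
      ultimately show "T \<in> invsets n \<rho> k" unfolding invsets_def by blast
    qed
    show "finite (invsets n \<rho> k)" unfolding invsets_def
      by (rule finite_subset[of _ "Pow {1..n}"]) auto
  qed
qed


lemma card_filter_sum:
  assumes "finite A"
  shows "card {x\<in>A. P x} = (\<Sum>x\<in>A. if P x then 1 else 0 :: nat)"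
  using sum.inter_filter[OF assms, of "\<lambda>_. 1::nat" P] by simp

lemma N_le:
  assumes "p permutes {1..n}" "q permutes {1..n}"
  shows "N_orbits n k p q \<le> card {S\<in>{S. S \<subseteq> {1..n} \<and> card S = k}. p ` S = S \<and> q ` S = S}"
  unfolding N_orbits_def
proof (rule card_mono)
  show "finite {S \<in> {S. S \<subseteq> {1..n} \<and> card S = k}. p ` S = S \<and> q ` S = S}"
    by (rule finite_subset[of _ "Pow {1..n}"]) auto
  show "{S. \<exists>x\<in>{1..n}. S = orb2 p q x \<and> card S = k}
      \<subseteq> {S \<in> {S. S \<subseteq> {1..n} \<and> card S = k}. p ` S = S \<and> q ` S = S}"
  proof (rule subsetI)
    fix S assume "S \<in> {S. \<exists>x\<in>{1..n}. S = orb2 p q x \<and> card S = k}"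
    then obtain x where x: "x \<in> {1..n}" "S = orb2 p q x" "card S = k" by blast
    show "S \<in> {S \<in> {S. S \<subseteq> {1..n} \<and> card S = k}. p ` S = S \<and> q ` S = S}"
      using orb2_sub[OF assms x(1)] orb2_inv1[OF assms x(1)] orb2_inv2[OF assms x(1)] x(2,3) by simp
  qed
qed

lemma N_le_n:
  "N_orbits n k p q \<le> n"
proof -
  have "{S. \<exists>x\<in>{1..n}. S = orb2 p q x \<and> card S = k} \<subseteq> orb2 p q ` {1..n}" by auto
  then have "N_orbits n k p q \<le> card (orb2 p q ` {1..n})" unfolding N_orbits_def
    by (intro card_mono) auto
  also have "\<dots> \<le> n" using card_image_le[of "{1..n}" "orb2 p q"] by simp
  finally show ?thesis .
qed

lemma EN_le_n:
  assumes "\<rho> permutes {1..n}" "\<rho>' permutes {1..n}"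
  shows "EN n k (conj_class n \<rho>) (conj_class n \<rho>') \<le> n"
proof -
  let ?C = "conj_class n \<rho>" and ?C' = "conj_class n \<rho>'"
  have "(\<Sum>\<pi>\<in>?C. \<Sum>\<pi>'\<in>?C'. real (N_orbits n k \<pi> \<pi>')) \<le> (\<Sum>\<pi>\<in>?C. \<Sum>\<pi>'\<in>?C'. real n)"
    by (intro sum_mono) (simp add: N_le_n)
  also have "\<dots> = real (card ?C) * real (card ?C') * n" by simp
  finally have *: "(\<Sum>\<pi>\<in>?C. \<Sum>\<pi>'\<in>?C'. real (N_orbits n k \<pi> \<pi>')) \<le> real (card ?C) * real (card ?C') * n" .
  have "card ?C > 0" "card ?C' > 0"
    using conj_class_finite[OF assms(1)] conj_class_finite[OF assms(2)] conj_class_self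
    by (auto simp: card_gt_0_iff)
  then have "(\<Sum>\<pi>\<in>?C. \<Sum>\<pi>'\<in>?C'. real (N_orbits n k \<pi> \<pi>')) / (real (card ?C) * real (card ?C'))
      \<le> (real (card ?C) * real (card ?C') * n) / (real (card ?C) * real (card ?C'))"
    using * by (intro divide_right_mono) auto
  also have "\<dots> = n" using \<open>card ?C > 0\<close> \<open>card ?C' > 0\<close> by simp
  finally show ?thesis unfolding EN_def .
qed


lemma EN_bound:
  assumes r: "\<rho> permutes {1..n}" "\<rho>' permutes {1..n}" and k: "k \<le> n"
  shows "EN n k (conj_class n \<rho>) (conj_class n \<rho>')
     \<le> real (card (invsets n \<rho> k)) * real (card (invsets n \<rho>' k)) / real (n choose k)"
proof -
  define C where "C = conj_class n \<rho>"
  define C' where "C' = conj_class n \<rho>'"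
  define K where "K = {S. S \<subseteq> {1..n} \<and> card S = k}"
  define a where "a S = card {\<pi>\<in>C. \<pi> ` S = S}" for S
  define b where "b S = card {\<pi>\<in>C'. \<pi> ` S = S}" for S
  define I where "I = card (invsets n \<rho> k)"
  define I' where "I' = card (invsets n \<rho>' k)"
  have fC: "finite C" unfolding C_def by (rule conj_class_finite[OF r(1)])
  have fC': "finite C'" unfolding C'_def by (rule conj_class_finite[OF r(2)])
  have fK: "finite K" unfolding K_def by (rule finite_subset[of _ "Pow {1..n}"]) auto
  have cK: "card K = n choose k" using n_subsets[of "{1..n}" k] by (simp add: K_def)
  have Kpos: "card K > 0" using cK k by simp
  have Cpos: "card C > 0" using fC conj_class_self unfolding C_def by (auto simp: card_gt_0_iff)
  have C'pos: "card C' > 0" using fC' conj_class_self unfolding C'_def by (auto simp: card_gt_0_iff)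
  define S0 where "S0 = {1..k}"
  have S0: "S0 \<subseteq> {1..n}" "card S0 = k" using k by (auto simp: S0_def)
  have aconst: "a S = a S0" if "S \<in> K" for S
    using that stab_le[OF _ S0(1) _ r(1), of S] stab_le[OF S0(1) _ _ r(1), of S] S0
    unfolding a_def K_def C_def by (intro antisym) auto
  have bconst: "b S = b S0" if "S \<in> K" for S
    using that stab_le[OF _ S0(1) _ r(2), of S] stab_le[OF S0(1) _ _ r(2), of S] S0
    unfolding b_def K_def C'_def by (intro antisym) auto
  define f where "f \<pi> S = (if \<pi> ` S = S then 1 else 0 :: nat)" for \<pi> :: "nat \<Rightarrow> nat" and S
  have a_sum: "a S = (\<Sum>\<pi>\<in>C. f \<pi> S)" for S unfolding a_def f_def by (rule card_filter_sum[OF fC])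
  have b_sum: "b S = (\<Sum>\<pi>\<in>C'. f \<pi> S)" for S unfolding b_def f_def by (rule card_filter_sum[OF fC'])
  have step1: "(\<Sum>\<pi>\<in>C. \<Sum>\<pi>'\<in>C'. N_orbits n k \<pi> \<pi>') \<le> (\<Sum>\<pi>\<in>C. \<Sum>\<pi>'\<in>C'. \<Sum>S\<in>K. f \<pi> S * f \<pi>' S)"
  proof (intro sum_mono)
    fix \<pi> \<pi>' assume "\<pi> \<in> C" "\<pi>' \<in> C'"
    then have p: "\<pi> permutes {1..n}" "\<pi>' permutes {1..n}"
      using conj_class_perm r unfolding C_def C'_def by auto
    have "N_orbits n k \<pi> \<pi>' \<le> card {S\<in>K. \<pi> ` S = S \<and> \<pi>' ` S = S}"
      using N_le[OF p, of k] unfolding K_def .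
    also have "\<dots> = (\<Sum>S\<in>K. f \<pi> S * f \<pi>' S)"
      unfolding card_filter_sum[OF fK] f_def by (intro sum.cong) auto
    finally show "N_orbits n k \<pi> \<pi>' \<le> (\<Sum>S\<in>K. f \<pi> S * f \<pi>' S)" .
  qed
  also have "\<dots> = (\<Sum>\<pi>\<in>C. \<Sum>S\<in>K. \<Sum>\<pi>'\<in>C'. f \<pi> S * f \<pi>' S)"
    by (intro sum.cong refl sum.swap)
  also have "\<dots> = (\<Sum>S\<in>K. \<Sum>\<pi>\<in>C. \<Sum>\<pi>'\<in>C'. f \<pi> S * f \<pi>' S)"
    by (rule sum.swap)
  also have "\<dots> = (\<Sum>S\<in>K. a S * b S)"
    unfolding a_sum b_sum by (simp add: sum_product)
  also have "\<dots> = (\<Sum>S\<in>K. a S0 * b S0)"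
    using aconst bconst by (intro sum.cong) auto
  also have "\<dots> = card K * a S0 * b S0" by simp
  finally have N1: "(\<Sum>\<pi>\<in>C. \<Sum>\<pi>'\<in>C'. N_orbits n k \<pi> \<pi>') \<le> card K * a S0 * b S0" .
  have inv_sum: "card (invsets n \<pi> k) = (\<Sum>S\<in>K. f \<pi> S)" for \<pi>
  proof -
    have "invsets n \<pi> k = {S\<in>K. \<pi> ` S = S}" unfolding invsets_def K_def by auto
    then show ?thesis using card_filter_sum[OF fK] unfolding f_def by simp
  qed
  have A: "card K * a S0 \<le> card C * I"
  proof -
    have "card K * a S0 = (\<Sum>S\<in>K. a S)" using aconst by simp
    also have "\<dots> = (\<Sum>\<pi>\<in>C. \<Sum>S\<in>K. f \<pi> S)" unfolding a_sum by (rule sum.swap)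
    also have "\<dots> = (\<Sum>\<pi>\<in>C. card (invsets n \<pi> k))" using inv_sum by simp
    also have "\<dots> \<le> (\<Sum>\<pi>\<in>C. I)"
      unfolding I_def C_def by (intro sum_mono inv_le[OF r(1)])
    finally show ?thesis by simp
  qed
  have B: "card K * b S0 \<le> card C' * I'"
  proof -
    have "card K * b S0 = (\<Sum>S\<in>K. b S)" using bconst by simp
    also have "\<dots> = (\<Sum>\<pi>\<in>C'. \<Sum>S\<in>K. f \<pi> S)" unfolding b_sum by (rule sum.swap)
    also have "\<dots> = (\<Sum>\<pi>\<in>C'. card (invsets n \<pi> k))" using inv_sum by simp
    also have "\<dots> \<le> (\<Sum>\<pi>\<in>C'. I')"
      unfolding I'_def C'_def by (intro sum_mono inv_le[OF r(2)])
    finally show ?thesis by simp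
  qed
  have AB: "(card K * a S0) * (card K * b S0) \<le> (card C * I) * (card C' * I')"
    using mult_mono[OF A B] by simp
  define X where "X = (\<Sum>\<pi>\<in>C. \<Sum>\<pi>'\<in>C'. real (N_orbits n k \<pi> \<pi>'))"
  have "real (\<Sum>\<pi>\<in>C. \<Sum>\<pi>'\<in>C'. N_orbits n k \<pi> \<pi>') \<le> real (card K * a S0 * b S0)"
    using N1 by (simp only: of_nat_le_iff)
  then have X: "X \<le> real (card K) * real (a S0) * real (b S0)"
    unfolding X_def by simp
  have "real ((card K * a S0) * (card K * b S0)) \<le> real ((card C * I) * (card C' * I'))"
    using AB by (simp only: of_nat_le_iff)
  then have AB': "(real (card K) * real (a S0) * real (b S0)) * real (card K) \<le> (real (card C) * real (card C')) * (real I * real I')"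
    by (simp add: mult_ac)
  have "X * real (card K) \<le> (real (card K) * real (a S0) * real (b S0)) * real (card K)"
    using X by (intro mult_right_mono) auto
  also note AB'
  finally have XK: "X * real (card K) \<le> (real (card C) * real (card C')) * (real I * real I')" .
  have "X \<le> (real (card C) * real (card C')) * (real I * real I') / real (card K)"
    using XK Kpos by (simp add: le_divide_eq)
  then have "X / (real (card C) * real (card C')) \<le> ((real (card C) * real (card C')) * (real I * real I') / real (card K)) / (real (card C) * real (card C'))"
    by (intro divide_right_mono) auto
  also have "\<dots> = (real I * real I') / real (card K)" using Cpos C'pos by simp
  finally have "X / (real (card C) * real (card C')) \<le> (real I * real I') / real (card K)" .
  then show ?thesis unfolding EN_def X_def C_def C'_def I_def I'_def cK .
qed

lemma ln_Suc_smallo: "(\<lambda>n. ln (real n + 1)) \<in> o(\<lambda>n. real n)"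
proof (rule smalloI_tendsto)
  have "filterlim (\<lambda>n. real (Suc n)) at_top sequentially"
    using filterlim_real_sequentially filterlim_sequentially_Suc by blast
  then have a: "(\<lambda>n. ln (real (Suc n)) / real (Suc n)) \<longlonglongrightarrow> 0"
    by (rule filterlim_compose[OF ln_x_over_x_tendsto_0])
  have "(\<lambda>n. (ln (real (Suc n)) / real (Suc n)) * (real (Suc n) / real n)) \<longlonglongrightarrow> 0 * 1"
    by (intro tendsto_mult a LIMSEQ_Suc_n_over_n)
  then have "(\<lambda>n. (ln (real (Suc n)) / real (Suc n)) * (real (Suc n) / real n)) \<longlonglongrightarrow> 0" by simp
  then show "(\<lambda>n. ln (real n + 1) / real n) \<longlonglongrightarrow> 0"
    by (rule Lim_transform_eventually) (auto simp: add.commute)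
  show "\<forall>\<^sub>F n in sequentially. real n \<noteq> 0"
    using eventually_gt_at_top[of 0] by eventually_elim auto
qed

lemma binom_maxterm:
  fixes n k :: nat
  assumes "0 < k" "k < n"
  shows "real n ^ n \<le> real (n + 1) * (real (n choose k) * real k ^ k * real (n - k) ^ (n - k))"
proof -
  define T where "T j = real (n choose j) * real k ^ j * real (n - k) ^ (n - j)" for j
  have nk: "real (n - k) > 0" using assms by simp
  have rec: "T (Suc j) * (real (Suc j) * real (n - k)) = T j * (real (n - j) * real k)" if "j < n" for j
  proof -
    have c0: "(n choose Suc j) * Suc j = (n choose j) * (n - j)"
      using binomial_absorb_comp[of n j] binomial_absorption[of j n] by (metis mult.commute)
    have c: "real (n choose Suc j) * real (Suc j) = real (n choose j) * real (n - j)"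
      using c0 by (metis of_nat_mult)
    have p: "real (n - k) ^ (n - j) = real (n - k) ^ (n - Suc j) * real (n - k)"
      using that by (metis Suc_diff_Suc power_Suc2)
    have "T (Suc j) * (real (Suc j) * real (n - k))
        = (real (n choose Suc j) * real (Suc j)) * (real k ^ j * real k * (real (n - k) ^ (n - Suc j) * real (n - k)))"
      by (simp add: T_def power_Suc2 mult_ac)
    also have "\<dots> = (real (n choose j) * real (n - j)) * (real k ^ j * real k * (real (n - k) ^ (n - Suc j) * real (n - k)))"
      by (simp only: c)
    also have "\<dots> = T j * (real (n - j) * real k)"
      by (simp add: T_def p mult_ac)
    finally show ?thesis .
  qed
  have up: "T j \<le> T (Suc j)" if "j < k" for j
  proof -
    have "T j * (real (Suc j) * real (n - k)) \<le> T j * (real (n - j) * real k)"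
    proof (rule mult_left_mono)
      show "0 \<le> T j" unfolding T_def by simp
      have "real (Suc j) * real (n - k) \<le> real k * real (n - j)"
        using that assms by (intro mult_mono) auto
      then show "real (Suc j) * real (n - k) \<le> real (n - j) * real k" by (simp add: mult.commute)
    qed
    also have "\<dots> = T (Suc j) * (real (Suc j) * real (n - k))" using rec[of j] that assms by simp
    finally show ?thesis using nk by (simp add: mult_le_cancel_right)
  qed
  have down: "T (Suc j) \<le> T j" if "k \<le> j" "j < n" for j
  proof -
    have "T (Suc j) * (real (Suc j) * real (n - k)) = T j * (real (n - j) * real k)" using rec[OF that(2)] .
    also have "\<dots> \<le> T j * (real (Suc j) * real (n - k))"
    proof (rule mult_left_mono)
      show "0 \<le> T j" unfolding T_def by simp
      have "real (n - j) * real k \<le> real (n - k) * real (Suc j)"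
        using that assms by (intro mult_mono) auto
      then show "real (n - j) * real k \<le> real (Suc j) * real (n - k)" by (simp add: mult.commute)
    qed
    finally show ?thesis using nk by (simp add: mult_le_cancel_right)
  qed
  have le1: "T (k - d) \<le> T k" for d
  proof (induction d)
    case (Suc d)
    show ?case
    proof (cases "d < k")
      case True
      then have "T (k - Suc d) \<le> T (Suc (k - Suc d))" by (intro up) auto
      also have "Suc (k - Suc d) = k - d" using True by simp
      finally show ?thesis using Suc.IH by simp
    next
      case False then show ?thesis using Suc.IH by simp
    qed
  qed simp
  have le2: "T (k + d) \<le> T k" if "k + d \<le> n" for d
    using that
  proof (induction d)
    case (Suc d)
    then have "T (Suc (k + d)) \<le> T (k + d)" by (intro down) auto
    then show ?case using Suc by simp
  qed simp
  have le: "T j \<le> T k" if "j \<le> n" for j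
  proof (cases "j \<le> k")
    case True then show ?thesis using le1[of "k - j"] by simp
  next
    case False then show ?thesis using le2[of "j - k"] that by simp
  qed
  have "real n ^ n = (real k + real (n - k)) ^ n" using assms by simp
  also have "\<dots> = (\<Sum>j\<le>n. T j)" unfolding binomial_ring T_def by simp
  also have "\<dots> \<le> (\<Sum>j\<le>n. T k)" by (intro sum_mono le) auto
  also have "\<dots> = real (n + 1) * T k" by simp
  finally show ?thesis unfolding T_def .
qed


lemma ln_lower: "s / (1 + s) \<le> ln (1 + s)" if "(s::real) \<ge> 0"
proof -
  have "ln (inverse (1 + s)) \<le> inverse (1 + s) - 1" using that by (intro ln_le_minus_one) auto
  then have "- ln (1 + s) \<le> inverse (1 + s) - 1" using that by (simp add: ln_inverse)
  moreover have "inverse (1 + s) - 1 = - (s / (1 + s))" using that by (simp add: field_simps)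
  ultimately show ?thesis by simp
qed

lemma final_arith:
  fixes n k :: nat and s :: real and M F C II \<delta> :: real
  assumes nk: "0 < k" "k < n"
    and s: "s = real k / real (n - k)"
    and M: "M \<le> (1 - \<delta>) * real n" and d: "\<delta> > 0"
    and II: "II * s ^ k \<le> 2 powr F * (1 + s) powr M"
    and Cb: "(1 + s) ^ n \<le> real (n + 1) * C * s ^ k"
    and II0: "II \<ge> 0"
  shows "II / C \<le> exp (- \<delta> * real k + F * ln 2 + ln (real n + 1))"
proof -
  have nk0: "real (n - k) > 0" using nk by simp
  have s0: "s > 0" using nk s by simp
  have sk: "s ^ k > 0" using s0 by simp
  have pn: "(1 + s) ^ n > 0" using s0 by simp
  have C0: "C > 0"
  proof -
    have "0 < real (n + 1) * C * s ^ k" using pn Cb by linarith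
    then show ?thesis using sk s0 by (auto simp: zero_less_mult_iff)
  qed
  have "II / C = (II * s ^ k) / (C * s ^ k)" using sk s0 by (simp add: mult_divide_mult_cancel_right)
  also have "\<dots> \<le> (2 powr F * (1 + s) powr M) / (C * s ^ k)"
    using II C0 sk by (intro divide_right_mono) auto
  also have "\<dots> \<le> (2 powr F * (1 + s) powr M) / ((1 + s) ^ n / real (n + 1))"
  proof (rule divide_left_mono)
    show "(1 + s) ^ n / real (n + 1) \<le> C * s ^ k" using Cb by (simp add: divide_le_eq mult_ac)
    show "0 \<le> 2 powr F * (1 + s) powr M" by simp
    show "0 < C * s ^ k * ((1 + s) ^ n / real (n + 1))" using C0 sk pn by simp
  qed
  also have "\<dots> = 2 powr F * real (n + 1) * ((1 + s) powr M / (1 + s) powr real n)"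
    using s0 by (simp add: powr_realpow field_simps)
  also have "(1 + s) powr M / (1 + s) powr real n = (1 + s) powr (M - real n)"
    by (simp add: powr_diff)
  also have "\<dots> \<le> (1 + s) powr (- \<delta> * real n)"
    using M s0 by (intro powr_mono) (auto simp: algebra_simps)
  also have "\<dots> = exp (- \<delta> * (real n * ln (1 + s)))"
    using s0 by (simp add: powr_def)
  also have "\<dots> \<le> exp (- \<delta> * real k)"
  proof -
    have "s / (1 + s) = real k / real n" using nk0 nk unfolding s by (simp add: field_simps)
    then have "real k / real n \<le> ln (1 + s)" using ln_lower[of s] s0 by simp
    then have "real k \<le> real n * ln (1 + s)" using nk by (simp add: divide_le_eq mult.commute)
    then show ?thesis using d by simp
  qed
  finally have "II / C \<le> 2 powr F * real (n + 1) * exp (- \<delta> * real k)"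
    by (simp add: mult_left_mono)
  also have "\<dots> = exp (- \<delta> * real k + F * ln 2 + ln (real n + 1))"
    by (simp add: exp_add exp_diff powr_def add.commute exp_minus field_simps)
  finally show ?thesis .
qed


lemma main_bound:
  fixes \<delta> :: real
  assumes r: "\<rho> permutes {1..n}" "\<rho>' permutes {1..n}" and k: "1 \<le> k" "2 * k \<le> n"
    and M: "real (total_cycles n \<rho> + total_cycles n \<rho>') \<le> (1 - \<delta>) * real n" and d: "\<delta> > 0"
  shows "EN n k (conj_class n \<rho>) (conj_class n \<rho>')
    \<le> exp (- \<delta> * real k + real (num_cycles n \<rho> 1 + num_cycles n \<rho>' 1) * ln 2 + ln (real n + 1))"
proof -
  have nk: "0 < k" "k < n" using k by auto
  have nk0: "real (n - k) > 0" using nk by simp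
  define s where "s = real k / real (n - k)"
  have s0: "0 < s" unfolding s_def using nk by simp
  have s1: "s \<le> 1" unfolding s_def using k nk0 by (simp add: divide_le_eq)
  define t where "t = sqrt s"
  have t0: "0 < t" unfolding t_def using s0 by simp
  have t1: "t \<le> 1" unfolding t_def using s1 by simp
  have t2: "t ^ 2 = s" unfolding t_def using s0 by simp
  define I where "I = real (card (invsets n \<rho> k))"
  define I' where "I' = real (card (invsets n \<rho>' k))"
  define c1 where "c1 = num_cycles n \<rho> 1"
  define c1' where "c1' = num_cycles n \<rho>' 1"
  define T1 where "T1 = total_cycles n \<rho>"
  define T2 where "T2 = total_cycles n \<rho>'"
  have I1: "I * t ^ k \<le> 2 ^ c1 * (1 + s) ^ T1"
    using invsets_bound[OF r(1) t0 t1, of k] t2 unfolding I_def c1_def T1_def by simp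
  have I2: "I' * t ^ k \<le> 2 ^ c1' * (1 + s) ^ T2"
    using invsets_bound[OF r(2) t0 t1, of k] t2 unfolding I'_def c1'_def T2_def by simp
  have sk: "s ^ k = t ^ k * t ^ k"
    by (metis t2 power2_eq_square power_mult_distrib)
  have "(I * I') * s ^ k = (I * t ^ k) * (I' * t ^ k)" unfolding sk by (simp add: mult_ac)
  also have "\<dots> \<le> (2 ^ c1 * (1 + s) ^ T1) * (2 ^ c1' * (1 + s) ^ T2)"
    by (rule mult_mono[OF I1 I2]) (use s0 t0 in \<open>auto simp: I_def I'_def\<close>)
  also have "\<dots> = 2 ^ (c1 + c1') * (1 + s) ^ (T1 + T2)" by (simp add: power_add mult_ac)
  also have "\<dots> = 2 powr real (c1 + c1') * (1 + s) powr real (T1 + T2)"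
  proof -
    have a: "2 powr real (c1 + c1') = (2::real) ^ (c1 + c1')" by (rule powr_realpow) simp
    have b: "(1 + s) powr real (T1 + T2) = (1 + s) ^ (T1 + T2)" using s0 by (intro powr_realpow) simp
    show ?thesis by (simp only: a b)
  qed
  finally have II: "(I * I') * s ^ k \<le> 2 powr real (c1 + c1') * (1 + s) powr real (T1 + T2)" .
  have Cb: "(1 + s) ^ n \<le> real (n + 1) * real (n choose k) * s ^ k"
  proof -
    have e1: "1 + s = real n / real (n - k)" unfolding s_def using nk0 nk by (simp add: field_simps)
    have e2: "real (n - k) ^ n = real (n - k) ^ k * real (n - k) ^ (n - k)"
      using nk by (simp add: power_add[symmetric])
    have "(1 + s) ^ n = real n ^ n / real (n - k) ^ n" unfolding e1 by (simp add: power_divide)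
    also have "\<dots> \<le> (real (n + 1) * (real (n choose k) * real k ^ k * real (n - k) ^ (n - k))) / real (n - k) ^ n"
      using binom_maxterm[OF nk] nk0 by (intro divide_right_mono) auto
    also have "\<dots> = real (n + 1) * real (n choose k) * s ^ k"
      unfolding e2 s_def using nk0 by (simp add: power_divide field_simps)
    finally show ?thesis .
  qed
  have "EN n k (conj_class n \<rho>) (conj_class n \<rho>') \<le> (I * I') / real (n choose k)"
    using EN_bound[OF r] nk unfolding I_def I'_def by simp
  also have "\<dots> \<le> exp (- \<delta> * real k + real (c1 + c1') * ln 2 + ln (real n + 1))"
    by (rule final_arith[OF nk s_def _ d II Cb]) (use M in \<open>auto simp: T1_def T2_def I_def I'_def\<close>)
  finally show ?thesis unfolding c1_def c1'_def .
qed

theorem lemma3p4: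
  fixes \<rho> \<rho>' :: "nat \<Rightarrow> nat \<Rightarrow> nat"
  assumes perm: "\<And>n. \<rho> n permutes {1..n}" "\<And>n. \<rho>' n permutes {1..n}"
    and fix_small: "(\<lambda>n. real (num_cycles n (\<rho> n) 1 + num_cycles n (\<rho>' n) 1)) \<in> o(\<lambda>n. real n)"
    and delta: "\<exists>\<delta>>0. eventually (\<lambda>n. real (total_cycles n (\<rho> n) + total_cycles n (\<rho>' n))
                                       \<le> (1 - \<delta>) * real n) sequentially"
  shows "\<exists>\<eta>>0. \<exists>g :: nat \<Rightarrow> real. g \<in> o(\<lambda>n. real n) \<and>
           (\<forall>n k. 1 \<le> k \<and> real k \<le> real n / 2 \<longrightarrow>
              EN n k (conj_class n (\<rho> n)) (conj_class n (\<rho>' n)) \<le> exp (- \<eta> * real k + g n))"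
proof -
  obtain \<delta> where d: "\<delta> > 0" and ev: "eventually (\<lambda>n. real (total_cycles n (\<rho> n) + total_cycles n (\<rho>' n))
                                       \<le> (1 - \<delta>) * real n) sequentially"
    using delta by blast
  obtain N1 where N1: "\<And>n. n \<ge> N1 \<Longrightarrow> real (total_cycles n (\<rho> n) + total_cycles n (\<rho>' n)) \<le> (1 - \<delta>) * real n"
    using ev unfolding eventually_sequentially by blast
  define f where "f n = real (num_cycles n (\<rho> n) 1 + num_cycles n (\<rho>' n) 1)" for n
  define g where "g n = f n * ln 2 + ln (real n + 1) + (if n < N1 then \<delta> * real N1 else 0)" for n
  have go: "g \<in> o(\<lambda>n. real n)"
  proof -
    have A: "(\<lambda>n. f n * ln 2) \<in> o(\<lambda>n. real n)"
    proof -
      have fo: "f \<in> o(\<lambda>n. real n)" using fix_small unfolding f_def[abs_def] .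
      have "((\<lambda>n. f n * ln 2) \<in> o(\<lambda>n. real n)) = (f \<in> o(\<lambda>n. real n))"
        by (rule landau_o.small.cmult_in_iff') simp
      then show ?thesis using fo by (simp only:)
    qed
    have C: "(\<lambda>n. if n < N1 then \<delta> * real N1 else 0) \<in> o(\<lambda>n. real n)"
    proof -
      have ev0: "eventually (\<lambda>n. (if n < N1 then \<delta> * real N1 else 0) = (0::real)) sequentially"
        using eventually_ge_at_top[of N1] by eventually_elim auto
      show ?thesis by (subst landau_o.small.in_cong[OF ev0]) (rule zero_in_smallo)
    qed
    have "(\<lambda>n. f n * ln 2 + ln (real n + 1)) \<in> o(\<lambda>n. real n)"
      by (rule sum_in_smallo(1)[OF A ln_Suc_smallo])
    then have "(\<lambda>n. (f n * ln 2 + ln (real n + 1)) + (if n < N1 then \<delta> * real N1 else 0)) \<in> o(\<lambda>n. real n)"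
      by (rule sum_in_smallo(1)[OF _ C])
    then show ?thesis unfolding g_def[abs_def] .
  qed
  have bound: "EN n k (conj_class n (\<rho> n)) (conj_class n (\<rho>' n)) \<le> exp (- \<delta> * real k + g n)"
    if nk: "1 \<le> k" "real k \<le> real n / 2" for n k
  proof -
    have "real (2 * k) \<le> real n" using nk by simp
    then have k2: "2 * k \<le> n" by (simp only: of_nat_le_iff)
    have f0: "f n \<ge> 0" unfolding f_def by simp
    show ?thesis
    proof (cases "n < N1")
      case True
      have "EN n k (conj_class n (\<rho> n)) (conj_class n (\<rho>' n)) \<le> real n"
        by (rule EN_le_n[OF perm])
      also have "\<dots> \<le> exp (ln (real n + 1))" by simp
      also have "\<dots> \<le> exp (- \<delta> * real k + g n)"
      proof -
        have "real k \<le> real N1" using True k2 by simp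
        then have "\<delta> * real k \<le> \<delta> * real N1" using d by (intro mult_left_mono) auto
        moreover have "0 \<le> f n * ln 2" using f0 by simp
        ultimately have "ln (real n + 1) \<le> - \<delta> * real k + g n" unfolding g_def using True by simp
        then show ?thesis by (rule exp_mono)
      qed
      finally show ?thesis .
    next
      case False
      have "EN n k (conj_class n (\<rho> n)) (conj_class n (\<rho>' n))
          \<le> exp (- \<delta> * real k + f n * ln 2 + ln (real n + 1))"
      proof -
        have N1n: "real (total_cycles n (\<rho> n) + total_cycles n (\<rho>' n)) \<le> (1 - \<delta>) * real n"
          using N1 False by simp
        show ?thesis using main_bound[OF perm nk(1) k2 N1n d] unfolding f_def .
      qed
      also have "\<dots> = exp (- \<delta> * real k + g n)"
      proof -
        have "g n = f n * ln 2 + ln (real n + 1)" unfolding g_def using False by simp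
        then show ?thesis by (simp only: add.assoc)
      qed
      finally show ?thesis .
    qed
  qed
  show ?thesis
  proof (intro exI[of _ \<delta>] conjI d exI[of _ g] go allI impI)
    fix n k assume a: "1 \<le> k \<and> real k \<le> real n / 2"
    show "EN n k (conj_class n (\<rho> n)) (conj_class n (\<rho>' n)) \<le> exp (- \<delta> * real k + g n)"
      using bound[of k n] a by blast
  qed
qed

end
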